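(* Let $S$ be a $1$-synchronizable system. Let $\tau\in T_0(S)$ and $a_1,\dots,a_n\in\Sigma_M$ be such that $\tau\cdot !a_1\cdots !a_n\in T_n(S)$ and $\mathrm{src}(a_i)=\mathrm{src}(a_j)$ for all $i,j\in\{1,\dots,n\}$. Then $\tau\cdot !?a_1\cdots !?a_n\in T_0(S)$.
   Context: A message set $M=(\Sigma_M,N,\mathrm{src},\mathrm{dst})$: finite set of messages, $N\ge1$ peers, $\mathrm{src}(a)\neq\mathrm{dst}(a)\in\{1,\dots,N\}$. Actions $!a$ (by peer $\mathrm{src}(a)$), $?a$ (by peer $\mathrm{dst}(a)$); traces are finite action sequences; $!?a$ abbreviates $!a\cdot?a$. For a trace $\tau$, $\pi_!(\tau)$ is the sequence of sent messages; $\mathrm{buf}_{i\to j}(\tau)$ is the word $w$ (if any) with (sent on $i\to j$) $=$ (received on $i\to j$)$\cdot w$. $\tau$ is FIFO ($k$-bounded FIFO) if for all $i,j$ and prefixes $\tau'$, $\mathrm{buf}_{i\to j}(\tau')$ is defined (and has length $\le k$); synchronous if of the form $!?a_1\cdots!?a_k$. A system $S=(P_1,\dots,P_N)$: finite automata $P_i$ (all states accepting) over actions of peer $i$, with one FIFO channel per ordered pair $i\neq j$. A configuration: one control state per peer and contents $w_{i,j}$ of channels; stable if all channels empty. $!a$ ($\mathrm{src}(a)=i,\mathrm{dst}(a)=j$) moves $P_i$ and appends $a$ to $w_{i,j}$; $?a$ moves $P_j$ and removes $a$ from the head of $w_{i,j}$; $c_0$ is the initial configuration. $T_k(S)$ ($k\ge1$):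 $k$-bounded FIFO traces $\tau$ with $c_0\xrightarrow{\tau}c$ for some $c$; $T_0(S)$: synchronous such traces; $T_\omega(S)=\bigcup_kT_k(S)$. $ST_k(S)=\{\pi_!(\tau)\mid\tau\in T_k(S)\}\cup\{(\pi_!(\tau),c)\mid c_0\xrightarrow{\tau}c,\ c\text{ stable},\ \tau\in T_k(S)\}$; $S$ is $1$-synchronizable if $ST_0(S)=ST_1(S)$. (Here $n$ in the claim denotes a number of messages, not the number of peers.) *)

theory Defs
  imports Main "HOL-Library.Sublist"
begin

datatype 'm act = Send 'm | Recv 'm

definition message_set :: "'m set \<Rightarrow> nat \<Rightarrow> ('m \<Rightarrow> nat) \<Rightarrow> ('m \<Rightarrow> nat) \<Rightarrow> bool" where
  "message_set Msgs N src dst \<longleftrightarrow> finite Msgs \<and> N \<ge> 1 \<and>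
     (\<forall>a\<in>Msgs. src a \<noteq> dst a \<and> src a \<in> {1..N} \<and> dst a \<in> {1..N})"

definition actor :: "('m \<Rightarrow> nat) \<Rightarrow> ('m \<Rightarrow> nat) \<Rightarrow> 'm act \<Rightarrow> nat" where
  "actor src dst x = (case x of Send a \<Rightarrow> src a | Recv a \<Rightarrow> dst a)"

definition msg_of :: "'m act \<Rightarrow> 'm" where
  "msg_of x = (case x of Send a \<Rightarrow> a | Recv a \<Rightarrow> a)"

(* A system S = (P_1,...,P_N): peer i is a finite automaton with state set Q i,
   initial state q0 i and transition relation delta i over actions of peer i
   (all states accepting). *)
definition system ::
  "'m set \<Rightarrow> nat \<Rightarrow> ('m \<Rightarrow> nat) \<Rightarrow> ('m \<Rightarrow> nat) \<Rightarrow>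
   (nat \<Rightarrow> 's set) \<Rightarrow> (nat \<Rightarrow> 's) \<Rightarrow> (nat \<Rightarrow> ('s \<times> 'm act \<times> 's) set) \<Rightarrow> bool" where
  "system Msgs N src dst Q q0 delta \<longleftrightarrow> message_set Msgs N src dst \<and>
     (\<forall>i. delta i \<noteq> {} \<longrightarrow> i \<in> {1..N}) \<and>
     (\<forall>i\<in>{1..N}. finite (Q i) \<and> q0 i \<in> Q i \<and>
        (\<forall>(q, x, q') \<in> delta i. q \<in> Q i \<and> q' \<in> Q i \<and> msg_of x \<in> Msgs \<and> actor src dst x = i))"

(* Configurations: control state of each peer, and contents w i j of channel i -> j *)
type_synonym ('s, 'm) config = "(nat \<Rightarrow> 's) \<times> (nat \<Rightarrow> nat \<Rightarrow> 'm list)"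

definition init_config :: "(nat \<Rightarrow> 's) \<Rightarrow> ('s, 'm) config" where
  "init_config q0 = (q0, \<lambda>i j. [])"

definition stable :: "nat \<Rightarrow> ('s, 'm) config \<Rightarrow> bool" where
  "stable N c \<longleftrightarrow> (\<forall>i\<in>{1..N}. \<forall>j\<in>{1..N}. i \<noteq> j \<longrightarrow> snd c i j = [])"

inductive step ::
  "('m \<Rightarrow> nat) \<Rightarrow> ('m \<Rightarrow> nat) \<Rightarrow> (nat \<Rightarrow> ('s \<times> 'm act \<times> 's) set) \<Rightarrow>
   ('s, 'm) config \<Rightarrow> 'm act \<Rightarrow> ('s, 'm) config \<Rightarrow> bool"
  for src dst delta where
  send: "(st (src a), Send a, q') \<in> delta (src a) \<Longrightarrow>
    step src dst delta (st, w) (Send a)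
      (st(src a := q'), w(src a := (w (src a))(dst a := w (src a) (dst a) @ [a])))"
| recv: "(st (dst a), Recv a, q') \<in> delta (dst a) \<Longrightarrow> w (src a) (dst a) = a # u \<Longrightarrow>
    step src dst delta (st, w) (Recv a)
      (st(dst a := q'), w(src a := (w (src a))(dst a := u)))"

inductive run ::
  "('m \<Rightarrow> nat) \<Rightarrow> ('m \<Rightarrow> nat) \<Rightarrow> (nat \<Rightarrow> ('s \<times> 'm act \<times> 's) set) \<Rightarrow>
   ('s, 'm) config \<Rightarrow> 'm act list \<Rightarrow> ('s, 'm) config \<Rightarrow> bool"
  for src dst delta where
  run_nil: "run src dst delta c [] c"
| run_cons: "step src dst delta c x c' \<Longrightarrow> run src dst delta c' t c'' \<Longrightarrow>
    run src dst delta c (x # t) c''"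

fun sends :: "'m act list \<Rightarrow> 'm list" where
  "sends [] = []"
| "sends (Send a # t) = a # sends t"
| "sends (Recv a # t) = sends t"

fun recvs :: "'m act list \<Rightarrow> 'm list" where
  "recvs [] = []"
| "recvs (Recv a # t) = a # recvs t"
| "recvs (Send a # t) = recvs t"

definition sent_on :: "('m \<Rightarrow> nat) \<Rightarrow> ('m \<Rightarrow> nat) \<Rightarrow> nat \<Rightarrow> nat \<Rightarrow> 'm act list \<Rightarrow> 'm list" where
  "sent_on src dst i j t = filter (\<lambda>a. src a = i \<and> dst a = j) (sends t)"

definition recv_on :: "('m \<Rightarrow> nat) \<Rightarrow> ('m \<Rightarrow> nat) \<Rightarrow> nat \<Rightarrow> nat \<Rightarrow> 'm act list \<Rightarrow> 'm list" where
  "recv_on src dst i j t = filter (\<lambda>a. src a = i \<and> dst a = j) (recvs t)"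

definition buf :: "('m \<Rightarrow> nat) \<Rightarrow> ('m \<Rightarrow> nat) \<Rightarrow> nat \<Rightarrow> nat \<Rightarrow> 'm act list \<Rightarrow> 'm list option" where
  "buf src dst i j t =
     (if \<exists>w. sent_on src dst i j t = recv_on src dst i j t @ w
      then Some (THE w. sent_on src dst i j t = recv_on src dst i j t @ w) else None)"

definition bounded_fifo :: "('m \<Rightarrow> nat) \<Rightarrow> ('m \<Rightarrow> nat) \<Rightarrow> nat \<Rightarrow> 'm act list \<Rightarrow> bool" where
  "bounded_fifo src dst k t \<longleftrightarrow>
     (\<forall>i j t'. prefix t' t \<longrightarrow> (\<exists>w. buf src dst i j t' = Some w \<and> length w \<le> k))"

definition sync_word :: "'m list \<Rightarrow> 'm act list" where
  "sync_word as = concat (map (\<lambda>a. [Send a, Recv a]) as)"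

definition synchronous :: "'m act list \<Rightarrow> bool" where
  "synchronous t \<longleftrightarrow> (\<exists>as. t = sync_word as)"

definition traces ::
  "('m \<Rightarrow> nat) \<Rightarrow> ('m \<Rightarrow> nat) \<Rightarrow> (nat \<Rightarrow> 's) \<Rightarrow> (nat \<Rightarrow> ('s \<times> 'm act \<times> 's) set) \<Rightarrow>
   nat \<Rightarrow> 'm act list set" where
  "traces src dst q0 delta k =
     {t. (if k = 0 then synchronous t else bounded_fifo src dst k t) \<and>
         (\<exists>c. run src dst delta (init_config q0) t c)}"

definition stable_traces ::
  "nat \<Rightarrow> ('m \<Rightarrow> nat) \<Rightarrow> ('m \<Rightarrow> nat) \<Rightarrow> (nat \<Rightarrow> 's) \<Rightarrow> (nat \<Rightarrow> ('s \<times> 'm act \<times> 's) set) \<Rightarrow>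
   nat \<Rightarrow> ('m list + ('m list \<times> ('s, 'm) config)) set" where
  "stable_traces N src dst q0 delta k =
     {Inl (sends t) | t. t \<in> traces src dst q0 delta k} \<union>
     {Inr (sends t, c) | t c. run src dst delta (init_config q0) t c \<and> stable N c \<and>
                              t \<in> traces src dst q0 delta k}"

definition one_synchronizable ::
  "nat \<Rightarrow> ('m \<Rightarrow> nat) \<Rightarrow> ('m \<Rightarrow> nat) \<Rightarrow> (nat \<Rightarrow> 's) \<Rightarrow> (nat \<Rightarrow> ('s \<times> 'm act \<times> 's) set) \<Rightarrow> bool" where
  "one_synchronizable N src dst q0 delta \<longleftrightarrow>
     stable_traces N src dst q0 delta 0 = stable_traces N src dst q0 delta 1"

end

theory Submission
  imports Defs
begin

inductive_cases run_consE: "run src dst delta c (x # t) c'"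
inductive_cases step_sendE: "step src dst delta c (Send a) c'"
inductive_cases step_recvE: "step src dst delta c (Recv a) c'"

lemma run_append:
  "run src dst delta c (t1 @ t2) c'' \<longleftrightarrow> (\<exists>c'. run src dst delta c t1 c' \<and> run src dst delta c' t2 c'')"
proof (induction t1 arbitrary: c)
  case Nil
  then show ?case by (metis append_Nil run.run_nil run.cases list.distinct(1))
next
  case (Cons x t1)
  show ?case
  proof
    assume "run src dst delta c ((x # t1) @ t2) c''"
    then obtain c1 where s: "step src dst delta c x c1" and r: "run src dst delta c1 (t1 @ t2) c''"
      by (auto elim: run_consE)
    then show "\<exists>c'. run src dst delta c (x # t1) c' \<and> run src dst delta c' t2 c''"
      using Cons.IH by (meson run.run_cons)
  next
    assume "\<exists>c'. run src dst delta c (x # t1) c' \<and> run src dst delta c' t2 c''"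
    then obtain c' c1 where s: "step src dst delta c x c1" and r: "run src dst delta c1 t1 c'"
      and r2: "run src dst delta c' t2 c''"
      by (auto elim: run_consE)
    then show "run src dst delta c ((x # t1) @ t2) c''"
    proof -
      have "run src dst delta c1 (t1 @ t2) c''" using Cons.IH[of c1] r r2 by blast
      with s show ?thesis by (auto intro: run.run_cons)
    qed
  qed
qed

definition mix :: "nat set \<Rightarrow> (nat \<Rightarrow> 's) \<Rightarrow> (nat \<Rightarrow> 's) \<Rightarrow> nat \<Rightarrow> 's" where
  "mix S f g = (\<lambda>i. if i \<in> S then f i else g i)"

lemma step_mix:
  assumes "step src dst delta c x c1" "step src dst delta d x d1" "snd c = snd d"
  shows "snd c1 = snd d1 \<and> step src dst delta (mix S (fst c) (fst d), snd c) x (mix S (fst c1) (fst d1), snd c1)"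
  using assms(1)
proof cases
  case (send st a q' w)
  from assms(2) send obtain st2 q2 where d: "d = (st2, w)"
    and d1: "d1 = (st2(src a := q2), w(src a := (w (src a))(dst a := w (src a) (dst a) @ [a])))"
    and t2: "(st2 (src a), Send a, q2) \<in> delta (src a)"
    using assms(3) by (auto elim!: step_sendE)
  let ?q = "if src a \<in> S then q' else q2"
  have "step src dst delta (mix S st st2, w) (Send a)
      ((mix S st st2)(src a := ?q), w(src a := (w (src a))(dst a := w (src a) (dst a) @ [a])))"
    apply (rule step.send) using send t2 by (auto simp: mix_def)
  moreover have "(mix S st st2)(src a := ?q) = mix S (st(src a := q')) (st2(src a := q2))"
    by (auto simp: mix_def)
  ultimately show ?thesis using send d d1 by simp
next
  case (recv st a q' w u)
  from assms(2) recv obtain st2 q2 where d: "d = (st2, w)"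
    and d1: "d1 = (st2(dst a := q2), w(src a := (w (src a))(dst a := u)))"
    and t2: "(st2 (dst a), Recv a, q2) \<in> delta (dst a)"
    using assms(3) by (auto elim!: step_recvE)
  let ?q = "if dst a \<in> S then q' else q2"
  have "step src dst delta (mix S st st2, w) (Recv a)
      ((mix S st st2)(dst a := ?q), w(src a := (w (src a))(dst a := u)))"
    apply (rule step.recv) using recv t2 by (auto simp: mix_def)
  moreover have "(mix S st st2)(dst a := ?q) = mix S (st(dst a := q')) (st2(dst a := q2))"
    by (auto simp: mix_def)
  ultimately show ?thesis using recv d d1 by simp
qed

lemma run_mix:
  assumes "run src dst delta c t c'"
  shows "run src dst delta d t d' \<Longrightarrow> snd c = snd d \<Longrightarrow>
     snd c' = snd d' \<and> run src dst delta (mix S (fst c) (fst d), snd c) t (mix S (fst c') (fst d'), snd c')"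
  using assms
proof (induction arbitrary: d rule: run.induct)
  case (run_nil c)
  then show ?case by (auto elim: run.cases intro: run.intros)
next
  case (run_cons c x c1 t c'')
  from run_cons.prems(1) obtain d1 where s: "step src dst delta d x d1" and r: "run src dst delta d1 t d'"
    by (auto elim: run_consE)
  from step_mix[OF run_cons.hyps(1) s run_cons.prems(2), of S] have
    h: "snd c1 = snd d1" "step src dst delta (mix S (fst c) (fst d), snd c) x (mix S (fst c1) (fst d1), snd c1)"
    by auto
  from run_cons.IH[OF r h(1)] h(2) show ?case by (auto intro: run.run_cons)
qed

lemma run_sends_peer:
  "run src dst delta (st, w) (map Send xs) c \<Longrightarrow> \<forall>x\<in>set xs. src x = p \<Longrightarrow> st2 p = st p
   \<Longrightarrow> \<exists>c'. run src dst delta (st2, w2) (map Send xs) c'"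
proof (induction xs arbitrary: st w st2 w2)
  case Nil
  then show ?case by (auto intro: run.intros)
next
  case (Cons x xs)
  from Cons.prems(1) obtain c1 where s: "step src dst delta (st, w) (Send x) c1"
    and r: "run src dst delta c1 (map Send xs) c" by (auto elim: run_consE)
  from s obtain q' where c1: "c1 = (st(src x := q'), w(src x := (w (src x))(dst x := w (src x) (dst x) @ [x])))"
    and t: "(st (src x), Send x, q') \<in> delta (src x)" by (auto elim!: step_sendE)
  have sx: "src x = p" using Cons.prems(2) by simp
  have s2: "step src dst delta (st2, w2) (Send x)
     (st2(src x := q'), w2(src x := (w2 (src x))(dst x := w2 (src x) (dst x) @ [x])))"
    apply (rule step.send) using t sx Cons.prems(3) by simp
  obtain c' where "run src dst delta (st2(src x := q'), w2(src x := (w2 (src x))(dst x := w2 (src x) (dst x) @ [x]))) (map Send xs) c'"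
  proof -
    have "\<exists>c'. run src dst delta (st2(src x := q'), w2(src x := (w2 (src x))(dst x := w2 (src x) (dst x) @ [x]))) (map Send xs) c'"
      apply (rule Cons.IH[of "st(src x := q')" "w(src x := (w (src x))(dst x := w (src x) (dst x) @ [x]))"])
      apply (rule r[unfolded c1])
      using Cons.prems(2) apply simp
      using Cons.prems(3) sx by simp
    then show ?thesis using that by blast
  qed
  with s2 have "run src dst delta (st2, w2) (Send x # map Send xs) c'" by (rule run.run_cons)
  then show ?case by (intro exI[of _ c']) simp
qed


lemma sends_append[simp]: "sends (t1 @ t2) = sends t1 @ sends t2"
  by (induction t1 rule: sends.induct) auto

lemma recvs_append[simp]: "recvs (t1 @ t2) = recvs t1 @ recvs t2"
  by (induction t1 rule: recvs.induct) auto

lemma sync_word_simps[simp]: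
  "sync_word [] = []" "sync_word (a # as) = Send a # Recv a # sync_word as"
  "sync_word (xs @ ys) = sync_word xs @ sync_word ys"
  by (auto simp: sync_word_def)

lemma sends_sync[simp]: "sends (sync_word xs) = xs"
  by (induction xs) auto

lemma recvs_sync[simp]: "recvs (sync_word xs) = xs"
  by (induction xs) auto

lemma sends_map_Send[simp]: "sends (map Send xs) = xs" by (induction xs) auto
lemma recvs_map_Send[simp]: "recvs (map Send xs) = []" by (induction xs) auto

lemma synchronous_eq: "synchronous t \<Longrightarrow> t = sync_word (sends t)"
  by (auto simp: synchronous_def)

lemma prefix_sync:
  "prefix t' (sync_word ys) \<Longrightarrow> \<exists>r. sends t' = recvs t' @ r \<and> length r \<le> 1"
proof (induction ys arbitrary: t')
  case Nil
  then show ?case by auto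
next
  case (Cons y ys)
  from Cons.prems have "t' = [] \<or> t' = [Send y] \<or> (\<exists>t''. t' = Send y # Recv y # t'' \<and> prefix t'' (sync_word ys))"
    by (cases t'; auto; rename_tac t1; case_tac t1; auto)
  then show ?case
  proof (elim disjE exE conjE)
    fix t'' assume "t' = Send y # Recv y # t''" "prefix t'' (sync_word ys)"
    then show ?thesis using Cons.IH[of t''] by auto
  qed (auto intro: exI[of _ "[y]"])
qed

lemma prefix_sync_sends:
  assumes "prefix t' (sync_word ys @ u)" "recvs u = []"
  shows "\<exists>r. sends t' = recvs t' @ r \<and> length r \<le> max 1 (length u)"
proof -
  from assms(1) consider "prefix t' (sync_word ys)" | v where "t' = sync_word ys @ v" "prefix v u"
    unfolding prefix_append by blast
  then show ?thesis
  proof cases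
    case 1 then show ?thesis using prefix_sync by fastforce
  next
    case 2
    then obtain z where z: "u = v @ z" by (auto simp: prefix_def)
    then have rv: "recvs v = []" using assms(2) by simp
    have "length (sends v) \<le> length v" by (induction v rule: sends.induct) auto
    moreover have "length v \<le> length u" using z by simp
    ultimately show ?thesis using 2 rv by (intro exI[of _ "sends v"]) auto
  qed
qed

lemma bounded_fifo_I:
  assumes "\<And>t'. prefix t' t \<Longrightarrow> \<exists>r. sends t' = recvs t' @ r \<and> length r \<le> k"
  shows "bounded_fifo src dst k t"
  unfolding bounded_fifo_def
proof (intro allI impI)
  fix i j t' assume "prefix t' t"
  then obtain r where r: "sends t' = recvs t' @ r" "length r \<le> k" using assms by blast
  let ?P = "\<lambda>a. src a = i \<and> dst a = j"
  have e: "sent_on src dst i j t' = recv_on src dst i j t' @ filter ?P r"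
    unfolding sent_on_def recv_on_def using r by simp
  then have "buf src dst i j t' = Some (filter ?P r)"
    unfolding buf_def by auto
  moreover have "length (filter ?P r) \<le> k" using r(2) by (meson le_trans length_filter_le)
  ultimately show "\<exists>w. buf src dst i j t' = Some w \<and> length w \<le> k" by blast
qed

lemma fifo_sync_sends:
  assumes "recvs u = []" "max 1 (length u) \<le> k"
  shows "bounded_fifo src dst k (sync_word ys @ u)"
  apply (rule bounded_fifo_I)
  using prefix_sync_sends[OF _ assms(1)] assms(2) by (meson le_trans)


lemma mix_same[simp]: "mix S f f = f" by (auto simp: mix_def)

lemma main_ind:
  fixes q0 :: "nat \<Rightarrow> 's" and delta :: "nat \<Rightarrow> ('s \<times> 'm act \<times> 's) set"
    and \<tau> :: "'m act list" and as :: "'m list"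
  assumes sys: "system Msgs N src dst Q q0 delta"
    and os: "one_synchronizable N src dst q0 delta"
  shows "\<tau> \<in> traces src dst q0 delta 0 \<Longrightarrow> set as \<subseteq> Msgs \<Longrightarrow>
    \<tau> @ map Send as \<in> traces src dst q0 delta (length as) \<Longrightarrow> \<forall>x\<in>set as. src x = p \<Longrightarrow>
    \<tau> @ sync_word as \<in> traces src dst q0 delta 0"
proof (induction as arbitrary: \<tau>)
  case Nil
  then show ?case by simp
next
  case (Cons a as)
  let ?c0 = "init_config q0 :: ('s, 'm) config"
  have sync: "synchronous \<tau>" using Cons.prems(1) by (simp add: traces_def)
  define ys where "ys = sends \<tau>"
  have tau: "\<tau> = sync_word ys" using synchronous_eq[OF sync] ys_def by simp
  have aM: "a \<in> Msgs" using Cons.prems(2) by simp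
  then have sd: "src a \<noteq> dst a" using sys unfolding system_def message_set_def by blast
  from Cons.prems(3) obtain c2 where "run src dst delta ?c0 ((\<tau> @ [Send a]) @ map Send as) c2"
    by (auto simp: traces_def simp del: split_paired_Ex)
  then obtain c1 where r1: "run src dst delta ?c0 (\<tau> @ [Send a]) c1"
    and r2: "run src dst delta c1 (map Send as) c2" using run_append by blast
  have "bounded_fifo src dst 1 (sync_word ys @ [Send a])"
    by (rule fifo_sync_sends) auto
  with r1 tau have "\<tau> @ [Send a] \<in> traces src dst q0 delta 1" by (auto simp: traces_def simp del: split_paired_Ex)
  then have "Inl (sends (\<tau> @ [Send a])) \<in> stable_traces N src dst q0 delta 1"
    unfolding stable_traces_def by blast
  then have "Inl (sends (\<tau> @ [Send a])) \<in> stable_traces N src dst q0 delta 0"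
    using os unfolding one_synchronizable_def by simp
  then obtain t where t: "t \<in> traces src dst q0 delta 0" and st: "sends t = ys @ [a]"
    unfolding stable_traces_def ys_def by auto
  have teq: "t = \<tau> @ [Send a, Recv a]"
    using t st tau synchronous_eq[of t] by (auto simp: traces_def simp del: split_paired_Ex)
  from t teq obtain d2 where "run src dst delta ?c0 ((\<tau> @ [Send a]) @ [Recv a]) d2"
    by (auto simp: traces_def simp del: split_paired_Ex)
  then obtain d1 where rd1: "run src dst delta ?c0 (\<tau> @ [Send a]) d1"
    and rd2: "run src dst delta d1 [Recv a] d2" using run_append by blast
  from rd2 obtain d2' where sd1: "step src dst delta d1 (Recv a) d2'" by (auto elim: run_consE)
  obtain q' u where tr: "(fst d1 (dst a), Recv a, q') \<in> delta (dst a)"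
    and hd: "snd d1 (src a) (dst a) = a # u"
    using sd1 by (cases d1) (auto elim!: step_recvE)
  define S where "S = {src a}"
  from run_mix[OF r1 rd1, of S] have m: "snd c1 = snd d1"
    and rm: "run src dst delta ?c0 (\<tau> @ [Send a]) (mix S (fst c1) (fst d1), snd c1)"
    by (auto simp: init_config_def)
  define w where "w = snd c1"
  define e2 where "e2 = ((mix S (fst c1) (fst d1))(dst a := q'), w(src a := (w (src a))(dst a := u)))"
  have "step src dst delta (mix S (fst c1) (fst d1), w) (Recv a) e2"
    unfolding e2_def
    apply (rule step.recv)
    using tr hd m sd unfolding S_def mix_def w_def by auto
  then have "run src dst delta (mix S (fst c1) (fst d1), w) [Recv a] e2"
    by (auto intro: run.intros)
  with rm have rr: "run src dst delta ?c0 (\<tau> @ [Send a, Recv a]) e2"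
    using run_append[of src dst delta ?c0 "\<tau> @ [Send a]" "[Recv a]" e2] w_def by auto
  have "\<forall>x\<in>set as. src x = src a" using Cons.prems(4) by simp
  moreover have "fst e2 (src a) = fst c1 (src a)" using sd unfolding e2_def mix_def S_def by simp
  ultimately obtain c3 where "run src dst delta e2 (map Send as) c3"
    using run_sends_peer[of src dst delta "fst c1" "snd c1" as c2 "src a" "fst e2" "snd e2"] r2
    by (cases c1) auto
  with rr have rfull: "run src dst delta ?c0 ((\<tau> @ [Send a, Recv a]) @ map Send as) c3"
    using run_append by blast
  show ?case
  proof (cases "as = []")
    case True
    then show ?thesis using t teq by simp
  next
    case False
    have "bounded_fifo src dst (length as) (sync_word (ys @ [a]) @ map Send as)"
      by (rule fifo_sync_sends) (use False in \<open>auto simp: Suc_le_eq\<close>)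
    then have "(\<tau> @ [Send a, Recv a]) @ map Send as \<in> traces src dst q0 delta (length as)"
      using rfull tau False by (auto simp: traces_def simp del: split_paired_Ex)
    moreover have "\<tau> @ [Send a, Recv a] \<in> traces src dst q0 delta 0" using t teq by simp
    ultimately have "(\<tau> @ [Send a, Recv a]) @ sync_word as \<in> traces src dst q0 delta 0"
      using Cons.IH[of "\<tau> @ [Send a, Recv a]"] Cons.prems(2,4) by simp
    then show ?thesis by simp
  qed
qed

theorem lemma4p4:
  fixes Msgs :: "'m set" and N :: nat and src dst :: "'m \<Rightarrow> nat"
    and Q :: "nat \<Rightarrow> 's set" and q0 :: "nat \<Rightarrow> 's"
    and delta :: "nat \<Rightarrow> ('s \<times> 'm act \<times> 's) set"
    and \<tau> :: "'m act list" and as :: "'m list"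
  assumes "system Msgs N src dst Q q0 delta"
    and "one_synchronizable N src dst q0 delta"
    and "\<tau> \<in> traces src dst q0 delta 0"
    and "set as \<subseteq> Msgs"
    and "\<tau> @ map Send as \<in> traces src dst q0 delta (length as)"
    and "\<forall>i < length as. \<forall>j < length as. src (as ! i) = src (as ! j)"
  shows "\<tau> @ sync_word as \<in> traces src dst q0 delta 0"
proof -
  have "\<forall>x\<in>set as. src x = src (hd as)"
    using assms(6) by (metis hd_conv_nth in_set_conv_nth length_greater_0_conv list.size(3) not_less0)
  then show ?thesis using main_ind[OF assms(1,2,3,4,5)] by blast
qed

end
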